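(* Consider the Lion-VR algorithm (defined in the context) under Assumptions (A2) and (A3), with initial batch size $B_0\ge1$, parameters $\beta_1,\beta_2\in(0,1]$ with $\beta_2\le\beta_1\le\sqrt{\beta_2}$ and $B_0\beta_2\le 1$, $\eta>0$, $0\le\lambda\le\frac1{2\eta T}$ and $\|\mathbf{x}_1\|_\infty\le\eta$. Then $$\mathbb{E}\left[\frac1T\sum_{t=1}^T\|\mathbf{v}_t-\nabla f(\mathbf{x}_t)\|^2\right]\le \frac{2\sigma^2}{B_0\beta_2T}+\frac{16\eta^2L^2d}{\beta_2}+3\beta_2\sigma^2 .$$
   Context: Setting: $f:\mathbb{R}^d\to\mathbb{R}$ is accessed through a stochastic gradient oracle: at each query a sample $\xi$ is drawn from a fixed distribution, independently of everything before, and for this $\xi$ one may evaluate $\nabla f(\mathbf{x};\xi)$ at several points $\mathbf{x}$. $\|\cdot\|$ is the Euclidean norm; $\operatorname{sign}$ acts coordinatewise with values in $\{-1,0,1\}$. (A2) $\mathbb{E}_\xi\|\nabla f(\mathbf{x};\xi)-\nabla f(\mathbf{y};\xi)\|^2\le L^2\|\mathbf{x}-\mathbf{y}\|^2$ for all $\mathbf{x},\mathbf{y}$. (A3) $\mathbb{E}_\xi[\nabla f(\mathbf{x};\xi)]=\nabla f(\mathbf{x})$ and $\mathbb{E}_\xi\|\nabla f(\mathbf{x};\xi)-\nabla f(\mathbf{x})\|^2\le\sigma^2$ for all $\mathbf{x}$. Lion-VR: given $\mathbf{x}_1$, $\beta_1,\beta_2\in(0,1]$, $\eta>0$, $\lambda\ge0$,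 batch size $B_0$. At $t=1$ draw independent $\xi_1^1,\dots,\xi_1^{B_0}$ and set $\mathbf{v}_1=\mathbf{m}_1=\frac1{B_0}\sum_{i=1}^{B_0}\nabla f(\mathbf{x}_1;\xi_1^i)$. For $t\ge2$ draw a fresh $\xi_t$ and set $\mathbf{v}_t=(1-\beta_1)\mathbf{m}_{t-1}+\beta_1\nabla f(\mathbf{x}_t;\xi_t)$ and $\mathbf{m}_t=(1-\beta_2)\mathbf{m}_{t-1}+\beta_2\nabla f(\mathbf{x}_t;\xi_t)+(1-\beta_2)\big(\nabla f(\mathbf{x}_t;\xi_t)-\nabla f(\mathbf{x}_{t-1};\xi_t)\big)$. For all $t\ge1$: $\mathbf{x}_{t+1}=\mathbf{x}_t-\eta(\operatorname{sign}(\mathbf{v}_t)+\lambda\mathbf{x}_t)$. *)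

theory Defs
  imports "HOL-Probability.Probability"
begin

definition sign_vec :: "real^'d \<Rightarrow> real^'d" where
  "sign_vec v = (\<chi> i. sgn (v $ i))"

text \<open>The sample path is omega :: nat => 's; the initial batch
  uses omega 0, ..., omega (B0-1); the fresh sample drawn at iteration t >= 2 is
  omega (B0 + t - 2). lion_vr g b1 b2 eta lam B0 x1 omega k = (x_t, v_t, m_t)
  with t = k + 1.\<close>
fun lion_vr :: "(real^'d \<Rightarrow> 's \<Rightarrow> real^'d) \<Rightarrow> real \<Rightarrow> real \<Rightarrow> real \<Rightarrow> real \<Rightarrow> nat
    \<Rightarrow> real^'d \<Rightarrow> (nat \<Rightarrow> 's) \<Rightarrow> nat \<Rightarrow> (real^'d) \<times> (real^'d) \<times> (real^'d)" where
  "lion_vr g b1 b2 eta lam B0 x1 \<omega> 0 =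
     (let m = (1 / real B0) *\<^sub>R (\<Sum>i<B0. g x1 (\<omega> i)) in (x1, m, m))"
| "lion_vr g b1 b2 eta lam B0 x1 \<omega> (Suc k) =
     (let (x, v, m) = lion_vr g b1 b2 eta lam B0 x1 \<omega> k;
          x' = x - eta *\<^sub>R (sign_vec v + lam *\<^sub>R x);
          \<xi> = \<omega> (B0 + k);
          gn = g x' \<xi>;
          v' = (1 - b1) *\<^sub>R m + b1 *\<^sub>R gn;
          m' = (1 - b2) *\<^sub>R m + b2 *\<^sub>R gn + (1 - b2) *\<^sub>R (gn - g x \<xi>)
      in (x', v', m'))"

definition lion_x where "lion_x g b1 b2 eta lam B0 x1 \<omega> t = fst (lion_vr g b1 b2 eta lam B0 x1 \<omega> (t - 1))"
definition lion_v where "lion_v g b1 b2 eta lam B0 x1 \<omega> t = fst (snd (lion_vr g b1 b2 eta lam B0 x1 \<omega> (t - 1)))"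

end

theory Submission
  imports Defs
begin

lemma sign_vec_meas: "sign_vec \<in> borel_measurable (borel :: (real^'d) measure)"
proof (rule iffD2[OF borel_measurable_euclidean_space], rule ballI)
  fix b :: "real^'d" assume "b \<in> Basis"
  then obtain i where b: "b = axis i 1" unfolding Basis_vec_def by auto
  have "(\<lambda>x. sign_vec x \<bullet> b) = (\<lambda>x. sgn (x $ i))"
    by (simp add: b sign_vec_def inner_axis)
  moreover have "(\<lambda>x::real^'d. sgn (x $ i)) \<in> borel_measurable borel"
    by (rule measurable_compose[OF borel_measurable_nth borel_measurable_sgn])
  ultimately show "(\<lambda>x. sign_vec x \<bullet> b) \<in> borel_measurable borel" by simp
qed

lemma bias_var:
  fixes Y :: "'s \<Rightarrow> 'a::euclidean_space"
  assumes P: "prob_space D" and Ym: "Y \<in> borel_measurable D"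
    and fin: "(\<integral>\<^sup>+s. ennreal ((norm (Y s))\<^sup>2) \<partial>D) < \<infinity>"
  shows "integrable D Y"
    and "(\<integral>\<^sup>+s. ennreal ((norm (a + Y s))\<^sup>2) \<partial>D)
          = ennreal ((norm (a + integral\<^sup>L D Y))\<^sup>2) + (\<integral>\<^sup>+s. ennreal ((norm (Y s - integral\<^sup>L D Y))\<^sup>2) \<partial>D)"
proof -
  interpret prob_space D by fact
  have sq: "integrable D (\<lambda>s. (norm (Y s))\<^sup>2)"
  proof (intro integrableI_nonneg)
    show "(\<lambda>s. (norm (Y s))\<^sup>2) \<in> borel_measurable D" using Ym by measurable
  qed (use fin in auto)
  show YI: "integrable D Y"
  proof (rule Bochner_Integration.integrable_bound[of _ "\<lambda>s. 1 + (norm (Y s))\<^sup>2"])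
    show "integrable D (\<lambda>s. 1 + (norm (Y s))\<^sup>2)" using sq by simp
    show "Y \<in> borel_measurable D" by fact
    show "AE x in D. norm (Y x) \<le> norm (1 + (norm (Y x))\<^sup>2)"
    proof (intro AE_I2)
      fix x have "0 \<le> (norm (Y x) - 1)\<^sup>2" by simp
      then have "norm (Y x) \<le> 1 + (norm (Y x))\<^sup>2"
        unfolding power2_diff using norm_ge_zero[of "Y x"] by (simp, linarith)
      then show "norm (Y x) \<le> norm (1 + (norm (Y x))\<^sup>2)" by simp
    qed
  qed
  define \<mu> where "\<mu> = integral\<^sup>L D Y"
  define c where "c = a + \<mu>"
  have eq1: "(norm (a + Y s))\<^sup>2 = (norm c)\<^sup>2 + 2 * (c \<bullet> Y s - c \<bullet> \<mu>) + (norm (Y s - \<mu>))\<^sup>2" for s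
    unfolding c_def power2_norm_eq_inner by (simp add: algebra_simps inner_commute)
  have eq2: "(norm (Y s - \<mu>))\<^sup>2 = (norm (Y s))\<^sup>2 - 2 * (\<mu> \<bullet> Y s) + (norm \<mu>)\<^sup>2" for s
    unfolding power2_norm_eq_inner by (simp add: algebra_simps inner_commute)
  have I1: "integrable D (\<lambda>s. c \<bullet> Y s)" using YI by simp
  have I2: "integrable D (\<lambda>s. \<mu> \<bullet> Y s)" using YI by simp
  have I3: "integrable D (\<lambda>s. (norm (Y s - \<mu>))\<^sup>2)"
    unfolding eq2 using sq I2 by simp
  have I4: "integrable D (\<lambda>s. (norm (a + Y s))\<^sup>2)"
    unfolding eq1 using I1 I3 by simp
  have int1: "integral\<^sup>L D (\<lambda>s. c \<bullet> Y s) = c \<bullet> \<mu>"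
    unfolding \<mu>_def using YI by simp
  have E: "integral\<^sup>L D (\<lambda>s. (norm (a + Y s))\<^sup>2) = (norm c)\<^sup>2 + integral\<^sup>L D (\<lambda>s. (norm (Y s - \<mu>))\<^sup>2)"
    unfolding eq1 using I1 I3 int1 by (simp add: integral_add integral_diff prob_space)
  have N1: "(\<integral>\<^sup>+s. ennreal ((norm (a + Y s))\<^sup>2) \<partial>D) = ennreal (integral\<^sup>L D (\<lambda>s. (norm (a + Y s))\<^sup>2))"
    using I4 by (intro nn_integral_eq_integral) auto
  have N2: "(\<integral>\<^sup>+s. ennreal ((norm (Y s - \<mu>))\<^sup>2) \<partial>D) = ennreal (integral\<^sup>L D (\<lambda>s. (norm (Y s - \<mu>))\<^sup>2))"
    using I3 by (intro nn_integral_eq_integral) auto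
  have P: "integral\<^sup>L D (\<lambda>s. (norm (Y s - \<mu>))\<^sup>2) \<ge> 0" by simp
  have "(\<integral>\<^sup>+s. ennreal ((norm (a + Y s))\<^sup>2) \<partial>D) = ennreal ((norm c)\<^sup>2) + (\<integral>\<^sup>+s. ennreal ((norm (Y s - \<mu>))\<^sup>2) \<partial>D)"
    unfolding N1 N2 E using P by (rule ennreal_plus[OF zero_le_power2])
  then show "(\<integral>\<^sup>+s. ennreal ((norm (a + Y s))\<^sup>2) \<partial>D)
          = ennreal ((norm (a + integral\<^sup>L D Y))\<^sup>2) + (\<integral>\<^sup>+s. ennreal ((norm (Y s - integral\<^sup>L D Y))\<^sup>2) \<partial>D)"
    by (simp only: c_def \<mu>_def)
qed

lemma fresh:
  fixes G :: "(nat \<Rightarrow> 's) \<Rightarrow> 's \<Rightarrow> ennreal"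
  assumes D: "prob_space D"
    and Gm: "(\<lambda>(X, x). G X x) \<in> borel_measurable (PiM UNIV (\<lambda>_::nat. D) \<Otimes>\<^sub>M D)"
    and inv: "\<And>X x. G (X(n := x)) x = G X x"
  shows "(\<integral>\<^sup>+\<omega>. G \<omega> (\<omega> n) \<partial>PiM UNIV (\<lambda>_::nat. D)) = (\<integral>\<^sup>+\<omega>. (\<integral>\<^sup>+s. G \<omega> s \<partial>D) \<partial>PiM UNIV (\<lambda>_::nat. D))"
proof -
  let ?S = "PiM UNIV (\<lambda>_::nat. D)"
  interpret S: prob_space ?S using D by (intro prob_space_PiM) auto
  interpret D: prob_space D by fact
  interpret DS: pair_sigma_finite D ?S by unfold_locales
  have dist: "distr (D \<Otimes>\<^sub>M ?S) ?S (\<lambda>(x, X). X(n := x)) = ?S"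
    using distr_pair_PiM_eq_PiM[of UNIV "\<lambda>_. D" n] D by simp
  have um: "(\<lambda>(x, X). X(n := x)) \<in> measurable (D \<Otimes>\<^sub>M ?S) ?S"
  proof -
    have "(\<lambda>p. (snd p) (n := fst p)) \<in> measurable (D \<Otimes>\<^sub>M ?S) (PiM (UNIV \<union> {n}) (\<lambda>_. D))"
      by (rule measurable_fun_upd) auto
    then show ?thesis by (simp add: case_prod_beta')
  qed
  have Gm2: "(\<lambda>\<omega>. G \<omega> (\<omega> n)) \<in> borel_measurable ?S"
  proof -
    have "(\<lambda>\<omega>. (\<omega>, \<omega> n)) \<in> measurable ?S (?S \<Otimes>\<^sub>M D)" by measurable
    from measurable_compose[OF this Gm] show ?thesis by simp
  qed
  have Gm3: "(\<lambda>p. G (snd p) (fst p)) \<in> borel_measurable (D \<Otimes>\<^sub>M ?S)"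
  proof -
    have "(\<lambda>(x, X). (X, x)) \<in> measurable (D \<Otimes>\<^sub>M ?S) (?S \<Otimes>\<^sub>M D)" by (rule measurable_pair_swap')
    from measurable_compose[OF this Gm] show ?thesis by (simp add: case_prod_beta')
  qed
  have "(\<integral>\<^sup>+\<omega>. G \<omega> (\<omega> n) \<partial>?S) = (\<integral>\<^sup>+\<omega>. G \<omega> (\<omega> n) \<partial>distr (D \<Otimes>\<^sub>M ?S) ?S (\<lambda>(x, X). X(n := x)))"
    by (simp add: dist)
  also have "\<dots> = (\<integral>\<^sup>+p. G ((\<lambda>(x, X). X(n := x)) p) (((\<lambda>(x, X). X(n := x)) p) n) \<partial>(D \<Otimes>\<^sub>M ?S))"
    by (rule nn_integral_distr[OF um]) (simp add: dist Gm2)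
  also have "\<dots> = (\<integral>\<^sup>+p. G (snd p) (fst p) \<partial>(D \<Otimes>\<^sub>M ?S))"
    by (simp add: case_prod_beta' inv)
  also have "\<dots> = (\<integral>\<^sup>+X. (\<integral>\<^sup>+x. G (snd (x, X)) (fst (x, X)) \<partial>D) \<partial>?S)"
    by (rule DS.nn_integral_snd[symmetric]) (rule Gm3)
  finally show ?thesis by simp
qed

locale lion =
  fixes gradf :: "real^'d \<Rightarrow> real^'d"
    and g :: "real^'d \<Rightarrow> 's \<Rightarrow> real^'d"
    and D :: "'s measure"
    and L \<sigma> \<beta>1 \<beta>2 \<eta> lam :: real
    and B0 T :: nat
    and x1 :: "real^'d"
  assumes D_prob: "prob_space D"
    and g_meas: "(\<lambda>(x, s). g x s) \<in> borel_measurable (borel \<Otimes>\<^sub>M D)"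
    and A2: "\<And>x y. (\<integral>\<^sup>+ s. ennreal ((norm (g x s - g y s))\<^sup>2) \<partial>D) \<le> ennreal (L\<^sup>2 * (norm (x - y))\<^sup>2)"
    and A3_mean: "\<And>x. (\<integral> s. g x s \<partial>D) = gradf x"
    and A3_var: "\<And>x. (\<integral>\<^sup>+ s. ennreal ((norm (g x s - gradf x))\<^sup>2) \<partial>D) \<le> ennreal (\<sigma>\<^sup>2)"
    and T: "T \<ge> 1"
    and B0: "B0 \<ge> 1"
    and b1: "0 < \<beta>1" "\<beta>1 \<le> 1"
    and b2: "0 < \<beta>2" "\<beta>2 \<le> 1"
    and b21: "\<beta>2 \<le> \<beta>1" and b12: "\<beta>1\<^sup>2 \<le> \<beta>2"
    and eta: "\<eta> > 0"
    and lam: "0 \<le> lam" "lam \<le> 1 / (2 * \<eta> * real T)"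
    and x1: "\<And>i. \<bar>x1 $ i\<bar> \<le> \<eta>"
begin

interpretation D: prob_space D by (rule D_prob)

lemma g_meas1[measurable]: "g x \<in> borel_measurable D"
proof -
  have "(\<lambda>s. (x, s)) \<in> measurable D (borel \<Otimes>\<^sub>M D)" by measurable
  from measurable_compose[OF this g_meas] show ?thesis by simp
qed

lemma g_meas_raw[measurable (raw)]:
  assumes "f \<in> measurable M borel" "h \<in> measurable M D"
  shows "(\<lambda>\<omega>. g (f \<omega>) (h \<omega>)) \<in> borel_measurable M"
proof -
  have "(\<lambda>\<omega>. (f \<omega>, h \<omega>)) \<in> measurable M (borel \<Otimes>\<^sub>M D)" using assms by measurable
  from measurable_compose[OF this g_meas] show ?thesis by simp
qed

lemma sign_meas_raw[measurable (raw)]: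
  assumes "f \<in> measurable M borel"
  shows "(\<lambda>\<omega>. sign_vec (f \<omega>)) \<in> borel_measurable M"
  using measurable_compose[OF assms sign_vec_meas] by simp

lemma var_fin: "(\<integral>\<^sup>+ s. ennreal ((norm (g x s - gradf x))\<^sup>2) \<partial>D) < \<infinity>"
  using le_less_trans[OF A3_var[of x] ennreal_less_top] by simp

lemma g_int: "integrable D (g x)"
proof -
  have "integrable D (\<lambda>s. g x s - gradf x)"
    by (rule bias_var(1)[OF D_prob _ var_fin]) measurable
  then have "integrable D (\<lambda>s. (g x s - gradf x) + gradf x)"
    by (rule Bochner_Integration.integrable_add) simp
  moreover have "(\<lambda>s. (g x s - gradf x) + gradf x) = g x" by auto
  ultimately show ?thesis by simp
qed

lemma A2_fin: "(\<integral>\<^sup>+ s. ennreal ((norm (g x s - g y s))\<^sup>2) \<partial>D) < \<infinity>"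
  using le_less_trans[OF A2[of x y] ennreal_less_top] by simp

lemma centered:
  "(\<integral>\<^sup>+ s. ennreal ((norm ((g x s - g y s) - (gradf x - gradf y)))\<^sup>2) \<partial>D) \<le> ennreal (L\<^sup>2 * (norm (x - y))\<^sup>2)"
  and lip2: "(norm (gradf x - gradf y))\<^sup>2 \<le> L\<^sup>2 * (norm (x - y))\<^sup>2"
proof -
  have EW: "integral\<^sup>L D (\<lambda>s. g x s - g y s) = gradf x - gradf y"
    using g_int[of x] g_int[of y] by (simp add: A3_mean)
  have bv: "(\<integral>\<^sup>+ s. ennreal ((norm (0 + (g x s - g y s)))\<^sup>2) \<partial>D)
     = ennreal ((norm (0 + (gradf x - gradf y)))\<^sup>2) + (\<integral>\<^sup>+ s. ennreal ((norm ((g x s - g y s) - (gradf x - gradf y)))\<^sup>2) \<partial>D)"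
    using bias_var(2)[OF D_prob _ A2_fin[of x y], of 0] EW by simp
  then have bv': "(\<integral>\<^sup>+ s. ennreal ((norm (g x s - g y s))\<^sup>2) \<partial>D)
     = ennreal ((norm (gradf x - gradf y))\<^sup>2) + (\<integral>\<^sup>+ s. ennreal ((norm ((g x s - g y s) - (gradf x - gradf y)))\<^sup>2) \<partial>D)"
    by simp
  show "(\<integral>\<^sup>+ s. ennreal ((norm ((g x s - g y s) - (gradf x - gradf y)))\<^sup>2) \<partial>D) \<le> ennreal (L\<^sup>2 * (norm (x - y))\<^sup>2)"
    using A2[of x y] unfolding bv' by (meson add_increasing order_refl zero_le order_trans)
  have "ennreal ((norm (gradf x - gradf y))\<^sup>2) \<le> ennreal (L\<^sup>2 * (norm (x - y))\<^sup>2)"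
    using A2[of x y] unfolding bv' by (meson add_increasing2 order_refl zero_le order_trans)
  then show "(norm (gradf x - gradf y))\<^sup>2 \<le> L\<^sup>2 * (norm (x - y))\<^sup>2"
    by (simp add: ennreal_le_iff)
qed

lemma lip: "norm (gradf x - gradf y) \<le> \<bar>L\<bar> * norm (x - y)"
proof (rule power2_le_imp_le)
  show "(norm (gradf x - gradf y))\<^sup>2 \<le> (\<bar>L\<bar> * norm (x - y))\<^sup>2"
    using lip2[of x y] by (simp add: power_mult_distrib)
qed simp

lemma gradf_meas[measurable]: "gradf \<in> borel_measurable borel"
proof -
  have "lipschitz_on \<bar>L\<bar> UNIV gradf"
    by (rule lipschitz_onI) (auto simp: dist_norm lip)
  then have "continuous_on UNIV gradf" by (rule lipschitz_on_continuous_on)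
  then show ?thesis by (rule borel_measurable_continuous_onI)
qed

end

context lion begin

interpretation D: prob_space D by (rule D_prob)

abbreviation "S \<equiv> PiM UNIV (\<lambda>_::nat. D)"
abbreviation "SM \<equiv> (borel :: (real^'d) measure) \<Otimes>\<^sub>M ((borel :: (real^'d) measure) \<Otimes>\<^sub>M (borel :: (real^'d) measure))"

definition "st \<omega> k = lion_vr g \<beta>1 \<beta>2 \<eta> lam B0 x1 \<omega> k"
definition "xnew p = fst p - \<eta> *\<^sub>R (sign_vec (fst (snd p)) + lam *\<^sub>R fst p)"
definition "step p \<xi> = (xnew p, (1-\<beta>1) *\<^sub>R snd (snd p) + \<beta>1 *\<^sub>R g (xnew p) \<xi>,
    (1-\<beta>2) *\<^sub>R snd (snd p) + \<beta>2 *\<^sub>R g (xnew p) \<xi> + (1-\<beta>2) *\<^sub>R (g (xnew p) \<xi> - g (fst p) \<xi>))"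
definition "m0 \<omega> = (1 / real B0) *\<^sub>R (\<Sum>i<B0. g x1 (\<omega> i))"

lemma st_0: "st \<omega> 0 = (x1, m0 \<omega>, m0 \<omega>)"
  by (simp add: st_def m0_def Let_def)

lemma st_Suc: "st \<omega> (Suc k) = step (st \<omega> k) (\<omega> (B0 + k))"
  by (simp add: st_def step_def xnew_def Let_def split: prod.splits)

lemma xnew_meas[measurable]: "xnew \<in> measurable SM borel"
  unfolding xnew_def by measurable

lemma step_meas: "(\<lambda>(p, \<xi>). step p \<xi>) \<in> measurable (SM \<Otimes>\<^sub>M D) SM"
  unfolding step_def by measurable

lemma m0_meas[measurable]: "m0 \<in> borel_measurable S"
  unfolding m0_def by measurable

lemma st_meas[measurable]: "(\<lambda>\<omega>. st \<omega> k) \<in> measurable S SM"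
proof (induction k)
  case 0
  show ?case unfolding st_0 by measurable
next
  case (Suc k)
  have "(\<lambda>\<omega>. (st \<omega> k, \<omega> (B0 + k))) \<in> measurable S (SM \<Otimes>\<^sub>M D)"
    using Suc by measurable
  from measurable_compose[OF this step_meas] show ?case by (simp add: st_Suc)
qed

lemma st_dep: "(\<And>i. i < B0 + k \<Longrightarrow> \<omega> i = \<omega>' i) \<Longrightarrow> st \<omega> k = st \<omega>' k"
proof (induction k)
  case 0
  then have "m0 \<omega> = m0 \<omega>'" unfolding m0_def by (auto intro!: sum.cong)
  then show ?case by (simp add: st_0)
next
  case (Suc k)
  then have "st \<omega> k = st \<omega>' k" by simp
  moreover have "\<omega> (B0 + k) = \<omega>' (B0 + k)" using Suc.prems by simp
  ultimately show ?case by (simp add: st_Suc)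
qed

lemma st_upd: "st (fun_upd \<omega> (B0 + k) s) k = st \<omega> k"
  by (rule st_dep) simp

lemma eta_lam_T: "\<eta> * lam \<le> 1 / (2 * real T)"
proof -
  have "\<eta> * lam \<le> \<eta> * (1 / (2 * \<eta> * real T))" using lam eta by (intro mult_left_mono) auto
  also have "\<dots> = 1 / (2 * real T)" using eta by simp
  finally show ?thesis .
qed

lemma eta_lam: "\<eta> * lam \<le> 1 / 2"
proof -
  have "1 / (2 * real T) \<le> 1 / 2" using T by (simp add: field_simps)
  then show ?thesis using eta_lam_T by linarith
qed

lemma x_bound: "\<bar>fst (st \<omega> k) $ i\<bar> \<le> (real k + 1) * \<eta>"
proof (induction k)
  case 0
  show ?case using x1[of i] by (simp add: st_0)
next
  case (Suc k)
  define x where "x = fst (st \<omega> k)"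
  define v where "v = fst (snd (st \<omega> k))"
  have "fst (st \<omega> (Suc k)) $ i = (1 - \<eta> * lam) * x $ i - \<eta> * sgn (v $ i)"
    by (simp add: st_Suc step_def xnew_def x_def v_def sign_vec_def algebra_simps)
  moreover have "\<bar>(1 - \<eta> * lam) * x $ i\<bar> \<le> \<bar>x $ i\<bar>"
  proof -
    have "0 \<le> 1 - \<eta> * lam" "1 - \<eta> * lam \<le> 1" using eta_lam eta lam by auto
    then show ?thesis by (simp add: abs_mult mult_left_le_one_le)
  qed
  moreover have "\<bar>\<eta> * sgn (v $ i)\<bar> \<le> \<eta>" using eta by (simp add: abs_mult abs_sgn_eq)
  ultimately have "\<bar>fst (st \<omega> (Suc k)) $ i\<bar> \<le> \<bar>x $ i\<bar> + \<eta>" by linarith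
  then show ?case using Suc.IH unfolding x_def by (simp add: algebra_simps)
qed

lemma norm_sq_vec: "(norm (z :: real^'d))\<^sup>2 = (\<Sum>i\<in>UNIV. (z $ i)\<^sup>2)"
  unfolding dot_square_norm[symmetric] inner_vec_def by (simp add: power2_eq_square)

lemma step_bound:
  assumes "k + 1 \<le> T"
  shows "(norm (xnew (st \<omega> k) - fst (st \<omega> k)))\<^sup>2 \<le> 9/4 * \<eta>\<^sup>2 * real CARD('d)"
proof -
  define x where "x = fst (st \<omega> k)"
  define v where "v = fst (snd (st \<omega> k))"
  define z where "z = sign_vec v + lam *\<^sub>R x"
  have eq: "xnew (st \<omega> k) - x = - (\<eta> *\<^sub>R z)" by (simp add: xnew_def x_def v_def z_def)
  have zi: "\<bar>z $ i\<bar> \<le> 3/2" for i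
  proof -
    have "\<bar>x $ i\<bar> \<le> (real k + 1) * \<eta>" unfolding x_def by (rule x_bound)
    then have "lam * \<bar>x $ i\<bar> \<le> lam * ((real k + 1) * \<eta>)" using lam by (intro mult_left_mono) auto
    also have "\<dots> = (real k + 1) * (\<eta> * lam)" by simp
    also have "\<dots> \<le> real T * (1 / (2 * real T))"
    proof (rule mult_mono)
      show "real k + 1 \<le> real T" using assms by simp
      show "\<eta> * lam \<le> 1 / (2 * real T)" by (rule eta_lam_T)
    qed (use eta lam in auto)
    also have "\<dots> = 1/2" using T by simp
    finally have "lam * \<bar>x $ i\<bar> \<le> 1/2" .
    moreover have "\<bar>sgn (v $ i)\<bar> \<le> 1" by (simp add: abs_sgn_eq)
    moreover have "\<bar>lam * x $ i\<bar> = lam * \<bar>x $ i\<bar>" using lam by (simp add: abs_mult)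
    moreover have "z $ i = sgn (v $ i) + lam * x $ i" by (simp add: z_def sign_vec_def)
    moreover have "\<bar>sgn (v $ i) + lam * x $ i\<bar> \<le> \<bar>sgn (v $ i)\<bar> + \<bar>lam * x $ i\<bar>"
      by (rule abs_triangle_ineq)
    ultimately show ?thesis by linarith
  qed
  have n1: "(norm (xnew (st \<omega> k) - x))\<^sup>2 = \<eta>\<^sup>2 * (norm z)\<^sup>2"
    unfolding eq norm_minus_cancel norm_scaleR power_mult_distrib by simp
  have "(norm z)\<^sup>2 = (\<Sum>i\<in>UNIV. (z $ i)\<^sup>2)" by (rule norm_sq_vec)
  also have "\<dots> \<le> (\<Sum>i\<in>(UNIV::'d set). 9/4)"
  proof (rule sum_mono)
    fix i
    have "(z $ i)\<^sup>2 = \<bar>z $ i\<bar>\<^sup>2" by simp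
    also have "\<dots> \<le> (3/2)\<^sup>2" by (rule power_mono[OF zi]) simp
    finally show "(z $ i)\<^sup>2 \<le> 9/4" by (simp add: power2_eq_square)
  qed
  also have "\<dots> = 9/4 * real CARD('d)" by simp
  finally have n2: "(norm z)\<^sup>2 \<le> 9/4 * real CARD('d)" .
  have "\<eta>\<^sup>2 * (norm z)\<^sup>2 \<le> \<eta>\<^sup>2 * (9/4 * real CARD('d))"
    by (rule mult_left_mono[OF n2]) simp
  then show ?thesis unfolding x_def[symmetric] n1 by (simp only: mult_ac)
qed

end

lemma nn_lin:
  assumes "f \<in> borel_measurable M" "h \<in> borel_measurable M" "0 \<le> a" "0 \<le> b"
    "\<And>x. 0 \<le> f x" "\<And>x. 0 \<le> h x"
  shows "(\<integral>\<^sup>+x. ennreal (a * f x + b * h x) \<partial>M) = ennreal a * (\<integral>\<^sup>+x. ennreal (f x) \<partial>M) + ennreal b * (\<integral>\<^sup>+x. ennreal (h x) \<partial>M)"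
proof -
  have "(\<integral>\<^sup>+x. ennreal (a * f x + b * h x) \<partial>M) = (\<integral>\<^sup>+x. ennreal a * ennreal (f x) + ennreal b * ennreal (h x) \<partial>M)"
    using assms by (intro nn_integral_cong) (simp add: ennreal_plus ennreal_mult)
  also have "\<dots> = (\<integral>\<^sup>+x. ennreal a * ennreal (f x) \<partial>M) + (\<integral>\<^sup>+x. ennreal b * ennreal (h x) \<partial>M)"
    using assms by (intro nn_integral_add) auto
  also have "\<dots> = ennreal a * (\<integral>\<^sup>+x. ennreal (f x) \<partial>M) + ennreal b * (\<integral>\<^sup>+x. ennreal (h x) \<partial>M)"
    using assms by (simp add: nn_integral_cmult)
  finally show ?thesis .
qed

lemma sq_sum: "(norm (u + v :: 'a::real_normed_vector))\<^sup>2 \<le> 2 * (norm u)\<^sup>2 + 2 * (norm v)\<^sup>2"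
proof -
  have "norm (u + v) \<le> norm u + norm v" by (rule norm_triangle_ineq)
  then have "(norm (u + v))\<^sup>2 \<le> (norm u + norm v)\<^sup>2" by (rule power_mono) simp
  also have "\<dots> \<le> 2 * (norm u)\<^sup>2 + 2 * (norm v)\<^sup>2"
    using zero_le_power2[of "norm u - norm v"] by (simp add: power2_sum power2_diff)
  finally show ?thesis .
qed

context lion begin

interpretation D: prob_space D by (rule D_prob)

definition "errm p = snd (snd p) - gradf (fst p)"
definition "errv p = fst (snd p) - gradf (fst p)"

lemma Egx: "integral\<^sup>L D (\<lambda>s. g x s - gradf x) = 0"
  using g_int[of x] by (simp add: A3_mean D.prob_space)

lemma inner_e:
  assumes c: "(norm (xnew p - fst p))\<^sup>2 \<le> c"
  shows "(\<integral>\<^sup>+\<xi>. ennreal ((norm (errm (step p \<xi>)))\<^sup>2) \<partial>D)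
     \<le> ennreal ((1-\<beta>2)\<^sup>2 * (norm (errm p))\<^sup>2 + (2*\<beta>2\<^sup>2 * \<sigma>\<^sup>2 + 2*(1-\<beta>2)\<^sup>2 * L\<^sup>2 * c))"
proof -
  define x where "x = fst p"
  define x' where "x' = xnew p"
  define A where "A \<xi> = g x' \<xi> - gradf x'" for \<xi>
  define C where "C \<xi> = (g x' \<xi> - g x \<xi>) - (gradf x' - gradf x)" for \<xi>
  define Y where "Y \<xi> = \<beta>2 *\<^sub>R A \<xi> + (1-\<beta>2) *\<^sub>R C \<xi>" for \<xi>
  have eY: "errm (step p \<xi>) = (1-\<beta>2) *\<^sub>R errm p + Y \<xi>" for \<xi>
    by (simp add: errm_def step_def Y_def A_def C_def x_def x'_def algebra_simps)
  have Am[measurable]: "A \<in> borel_measurable D" unfolding A_def by measurable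
  have Cm[measurable]: "C \<in> borel_measurable D" unfolding C_def by measurable
  have Ym[measurable]: "Y \<in> borel_measurable D" unfolding Y_def by measurable
  have pw: "(norm (Y \<xi>))\<^sup>2 \<le> (2*\<beta>2\<^sup>2) * (norm (A \<xi>))\<^sup>2 + (2*(1-\<beta>2)\<^sup>2) * (norm (C \<xi>))\<^sup>2" for \<xi>
    using sq_sum[of "\<beta>2 *\<^sub>R A \<xi>" "(1-\<beta>2) *\<^sub>R C \<xi>"]
    by (simp add: Y_def power_mult_distrib)
  have "(\<integral>\<^sup>+\<xi>. ennreal ((norm (Y \<xi>))\<^sup>2) \<partial>D)
      \<le> (\<integral>\<^sup>+\<xi>. ennreal ((2*\<beta>2\<^sup>2) * (norm (A \<xi>))\<^sup>2 + (2*(1-\<beta>2)\<^sup>2) * (norm (C \<xi>))\<^sup>2) \<partial>D)"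
    by (intro nn_integral_mono ennreal_leI pw)
  also have "\<dots> = ennreal (2*\<beta>2\<^sup>2) * (\<integral>\<^sup>+\<xi>. ennreal ((norm (A \<xi>))\<^sup>2) \<partial>D)
       + ennreal (2*(1-\<beta>2)\<^sup>2) * (\<integral>\<^sup>+\<xi>. ennreal ((norm (C \<xi>))\<^sup>2) \<partial>D)"
    by (rule nn_lin) auto
  also have "\<dots> \<le> ennreal (2*\<beta>2\<^sup>2) * ennreal (\<sigma>\<^sup>2) + ennreal (2*(1-\<beta>2)\<^sup>2) * ennreal (L\<^sup>2 * c)"
  proof (intro add_mono mult_left_mono)
    show "(\<integral>\<^sup>+\<xi>. ennreal ((norm (A \<xi>))\<^sup>2) \<partial>D) \<le> ennreal (\<sigma>\<^sup>2)"
      unfolding A_def by (rule A3_var)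
    have "(\<integral>\<^sup>+\<xi>. ennreal ((norm (C \<xi>))\<^sup>2) \<partial>D) \<le> ennreal (L\<^sup>2 * (norm (x' - x))\<^sup>2)"
      unfolding C_def by (rule centered)
    also have "\<dots> \<le> ennreal (L\<^sup>2 * c)"
      using c by (intro ennreal_leI mult_left_mono) (auto simp: x_def x'_def)
    finally show "(\<integral>\<^sup>+\<xi>. ennreal ((norm (C \<xi>))\<^sup>2) \<partial>D) \<le> ennreal (L\<^sup>2 * c)" .
  qed auto
  also have "\<dots> = ennreal (2*\<beta>2\<^sup>2 * \<sigma>\<^sup>2 + 2*(1-\<beta>2)\<^sup>2 * L\<^sup>2 * c)"
  proof -
    have c0: "0 \<le> c" using c by (meson order_trans zero_le_power2)
    have 1: "ennreal (2*\<beta>2\<^sup>2) * ennreal (\<sigma>\<^sup>2) = ennreal (2*\<beta>2\<^sup>2 * \<sigma>\<^sup>2)"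
      by (rule ennreal_mult[symmetric]) auto
    have 2: "ennreal (2*(1-\<beta>2)\<^sup>2) * ennreal (L\<^sup>2 * c) = ennreal (2*(1-\<beta>2)\<^sup>2 * L\<^sup>2 * c)"
      unfolding mult.assoc[of "2*(1-\<beta>2)\<^sup>2"] by (rule ennreal_mult[symmetric]) (use c0 in auto)
    show ?thesis unfolding 1 2 using c0 by (intro ennreal_plus[symmetric]) auto
  qed
  finally have Yb: "(\<integral>\<^sup>+\<xi>. ennreal ((norm (Y \<xi>))\<^sup>2) \<partial>D) \<le> ennreal (2*\<beta>2\<^sup>2 * \<sigma>\<^sup>2 + 2*(1-\<beta>2)\<^sup>2 * L\<^sup>2 * c)" .
  then have Yf: "(\<integral>\<^sup>+\<xi>. ennreal ((norm (Y \<xi>))\<^sup>2) \<partial>D) < \<infinity>"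
    using le_less_trans[OF Yb ennreal_less_top] by simp
  have EY: "integral\<^sup>L D Y = 0"
  proof -
    have iA: "integrable D A" unfolding A_def using g_int by simp
    have iC: "integrable D C" unfolding C_def using g_int by simp
    have "integral\<^sup>L D A = 0" unfolding A_def by (rule Egx)
    moreover have "integral\<^sup>L D C = 0"
      unfolding C_def using g_int[of x'] g_int[of x] by (simp add: A3_mean D.prob_space)
    ultimately show ?thesis unfolding Y_def using iA iC by simp
  qed
  have "(\<integral>\<^sup>+\<xi>. ennreal ((norm (errm (step p \<xi>)))\<^sup>2) \<partial>D) = (\<integral>\<^sup>+\<xi>. ennreal ((norm ((1-\<beta>2) *\<^sub>R errm p + Y \<xi>))\<^sup>2) \<partial>D)"
    by (simp add: eY)
  also have "\<dots> = ennreal ((norm ((1-\<beta>2) *\<^sub>R errm p + integral\<^sup>L D Y))\<^sup>2) + (\<integral>\<^sup>+\<xi>. ennreal ((norm (Y \<xi> - integral\<^sup>L D Y))\<^sup>2) \<partial>D)"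
    by (rule bias_var(2)[OF D_prob Ym Yf])
  also have "\<dots> = ennreal ((1-\<beta>2)\<^sup>2 * (norm (errm p))\<^sup>2) + (\<integral>\<^sup>+\<xi>. ennreal ((norm (Y \<xi>))\<^sup>2) \<partial>D)"
    by (simp add: EY power_mult_distrib)
  also have "\<dots> \<le> ennreal ((1-\<beta>2)\<^sup>2 * (norm (errm p))\<^sup>2) + ennreal (2*\<beta>2\<^sup>2 * \<sigma>\<^sup>2 + 2*(1-\<beta>2)\<^sup>2 * L\<^sup>2 * c)"
    by (rule add_left_mono[OF Yb])
  also have "\<dots> = ennreal ((1-\<beta>2)\<^sup>2 * (norm (errm p))\<^sup>2 + (2*\<beta>2\<^sup>2 * \<sigma>\<^sup>2 + 2*(1-\<beta>2)\<^sup>2 * L\<^sup>2 * c))"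
  proof -
    have "0 \<le> c" using c by (meson order_trans zero_le_power2)
    then show ?thesis by (intro ennreal_plus[symmetric]) auto
  qed
  finally show ?thesis .
qed

lemma inner_v:
  assumes c: "(norm (xnew p - fst p))\<^sup>2 \<le> c"
  shows "(\<integral>\<^sup>+\<xi>. ennreal ((norm (errv (step p \<xi>)))\<^sup>2) \<partial>D)
     \<le> ennreal ((1-\<beta>1)\<^sup>2 * (2 * (norm (errm p))\<^sup>2 + 2 * L\<^sup>2 * c) + \<beta>1\<^sup>2 * \<sigma>\<^sup>2)"
proof -
  define x where "x = fst p"
  define x' where "x' = xnew p"
  define A where "A \<xi> = g x' \<xi> - gradf x'" for \<xi>
  define Y where "Y \<xi> = \<beta>1 *\<^sub>R A \<xi>" for \<xi>
  define a where "a = (1-\<beta>1) *\<^sub>R (snd (snd p) - gradf x')"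
  have eY: "errv (step p \<xi>) = a + Y \<xi>" for \<xi>
    by (simp add: errv_def step_def Y_def A_def a_def x'_def algebra_simps)
  have Am[measurable]: "A \<in> borel_measurable D" unfolding A_def by measurable
  have Ym[measurable]: "Y \<in> borel_measurable D" unfolding Y_def by measurable
  have "(\<integral>\<^sup>+\<xi>. ennreal ((norm (Y \<xi>))\<^sup>2) \<partial>D) = (\<integral>\<^sup>+\<xi>. ennreal (\<beta>1\<^sup>2) * ennreal ((norm (A \<xi>))\<^sup>2) \<partial>D)"
    by (intro nn_integral_cong) (simp add: Y_def power_mult_distrib ennreal_mult)
  also have "\<dots> = ennreal (\<beta>1\<^sup>2) * (\<integral>\<^sup>+\<xi>. ennreal ((norm (A \<xi>))\<^sup>2) \<partial>D)"
    by (rule nn_integral_cmult) simp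
  also have "\<dots> \<le> ennreal (\<beta>1\<^sup>2) * ennreal (\<sigma>\<^sup>2)"
    unfolding A_def by (intro mult_left_mono A3_var) simp
  also have "\<dots> = ennreal (\<beta>1\<^sup>2 * \<sigma>\<^sup>2)" by (simp add: ennreal_mult)
  finally have Yb: "(\<integral>\<^sup>+\<xi>. ennreal ((norm (Y \<xi>))\<^sup>2) \<partial>D) \<le> ennreal (\<beta>1\<^sup>2 * \<sigma>\<^sup>2)" .
  then have Yf: "(\<integral>\<^sup>+\<xi>. ennreal ((norm (Y \<xi>))\<^sup>2) \<partial>D) < \<infinity>"
    using le_less_trans[OF Yb ennreal_less_top] by simp
  have EY: "integral\<^sup>L D Y = 0"
    unfolding Y_def A_def using Egx[of x'] g_int[of x'] by simp
  have an: "(norm a)\<^sup>2 \<le> (1-\<beta>1)\<^sup>2 * (2 * (norm (errm p))\<^sup>2 + 2 * L\<^sup>2 * c)"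
  proof -
    have "snd (snd p) - gradf x' = errm p + (gradf x - gradf x')" by (simp add: errm_def x_def)
    then have "(norm (snd (snd p) - gradf x'))\<^sup>2 \<le> 2 * (norm (errm p))\<^sup>2 + 2 * (norm (gradf x - gradf x'))\<^sup>2"
      using sq_sum by metis
    also have "(norm (gradf x - gradf x'))\<^sup>2 \<le> L\<^sup>2 * c"
    proof -
      have "(norm (gradf x - gradf x'))\<^sup>2 \<le> L\<^sup>2 * (norm (x - x'))\<^sup>2" by (rule lip2)
      also have "\<dots> \<le> L\<^sup>2 * c" using c
        by (intro mult_left_mono) (auto simp: x_def x'_def norm_minus_commute)
      finally show ?thesis .
    qed
    finally have "(norm (snd (snd p) - gradf x'))\<^sup>2 \<le> 2 * (norm (errm p))\<^sup>2 + 2 * (L\<^sup>2 * c)" by simp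
    then have "(1-\<beta>1)\<^sup>2 * (norm (snd (snd p) - gradf x'))\<^sup>2 \<le> (1-\<beta>1)\<^sup>2 * (2 * (norm (errm p))\<^sup>2 + 2 * L\<^sup>2 * c)"
      by (intro mult_left_mono) auto
    then show ?thesis by (simp add: a_def power_mult_distrib)
  qed
  have "(\<integral>\<^sup>+\<xi>. ennreal ((norm (errv (step p \<xi>)))\<^sup>2) \<partial>D) = (\<integral>\<^sup>+\<xi>. ennreal ((norm (a + Y \<xi>))\<^sup>2) \<partial>D)"
    by (simp add: eY)
  also have "\<dots> = ennreal ((norm (a + integral\<^sup>L D Y))\<^sup>2) + (\<integral>\<^sup>+\<xi>. ennreal ((norm (Y \<xi> - integral\<^sup>L D Y))\<^sup>2) \<partial>D)"
    by (rule bias_var(2)[OF D_prob Ym Yf])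
  also have "\<dots> = ennreal ((norm a)\<^sup>2) + (\<integral>\<^sup>+\<xi>. ennreal ((norm (Y \<xi>))\<^sup>2) \<partial>D)"
    by (simp add: EY)
  also have "\<dots> \<le> ennreal ((1-\<beta>1)\<^sup>2 * (2 * (norm (errm p))\<^sup>2 + 2 * L\<^sup>2 * c)) + ennreal (\<beta>1\<^sup>2 * \<sigma>\<^sup>2)"
    by (intro add_mono Yb ennreal_leI an)
  also have "\<dots> = ennreal ((1-\<beta>1)\<^sup>2 * (2 * (norm (errm p))\<^sup>2 + 2 * L\<^sup>2 * c) + \<beta>1\<^sup>2 * \<sigma>\<^sup>2)"
  proof -
    have "0 \<le> c" using c by (meson order_trans zero_le_power2)
    then show ?thesis by (intro ennreal_plus[symmetric]) auto
  qed
  finally show ?thesis .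
qed

end

context lion begin

interpretation D: prob_space D by (rule D_prob)
interpretation S: prob_space S using D_prob by (intro prob_space_PiM) auto

lemma errm_meas[measurable]: "errm \<in> borel_measurable SM"
  unfolding errm_def by measurable
lemma errv_meas[measurable]: "errv \<in> borel_measurable SM"
  unfolding errv_def by measurable

lemma step_meas_raw[measurable (raw)]:
  assumes "f \<in> measurable M SM" "h \<in> measurable M D"
  shows "(\<lambda>\<omega>. step (f \<omega>) (h \<omega>)) \<in> measurable M SM"
proof -
  have "(\<lambda>\<omega>. (f \<omega>, h \<omega>)) \<in> measurable M (SM \<Otimes>\<^sub>M D)" using assms by measurable
  from measurable_compose[OF this step_meas] show ?thesis by simp
qed

definition "Ek k = (\<integral>\<^sup>+\<omega>. ennreal ((norm (errm (st \<omega> k)))\<^sup>2) \<partial>S)"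
definition "Vk k = (\<integral>\<^sup>+\<omega>. ennreal ((norm (errv (st \<omega> k)))\<^sup>2) \<partial>S)"
definition "c0 = 9/4 * \<eta>\<^sup>2 * real CARD('d)"

lemma c0_nonneg: "0 \<le> c0" unfolding c0_def by simp

lemma nn_affine:
  assumes "f \<in> borel_measurable S" "\<And>x. 0 \<le> f x" "0 \<le> a" "0 \<le> b"
  shows "(\<integral>\<^sup>+x. ennreal (a * f x + b) \<partial>S) = ennreal a * (\<integral>\<^sup>+x. ennreal (f x) \<partial>S) + ennreal b"
proof -
  have "(\<integral>\<^sup>+x. ennreal (a * f x + b) \<partial>S) = (\<integral>\<^sup>+x. ennreal (a * f x + b * (\<lambda>_. 1) x) \<partial>S)" by simp
  also have "\<dots> = ennreal a * (\<integral>\<^sup>+x. ennreal (f x) \<partial>S) + ennreal b * (\<integral>\<^sup>+x. ennreal ((\<lambda>_. 1) x) \<partial>S)"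
    by (rule nn_lin) (use assms in auto)
  also have "(\<integral>\<^sup>+x. ennreal ((\<lambda>_. 1::real) x) \<partial>S) = 1" by (simp add: S.emeasure_space_1)
  finally show ?thesis by simp
qed

lemma E_Suc:
  assumes "k + 1 \<le> T"
  shows "Ek (Suc k) \<le> ennreal ((1-\<beta>2)\<^sup>2) * Ek k + ennreal (2*\<beta>2\<^sup>2 * \<sigma>\<^sup>2 + 2*(1-\<beta>2)\<^sup>2 * L\<^sup>2 * c0)"
proof -
  have "Ek (Suc k) = (\<integral>\<^sup>+\<omega>. ennreal ((norm (errm (step (st \<omega> k) (\<omega> (B0 + k)))))\<^sup>2) \<partial>S)"
    by (simp add: Ek_def st_Suc)
  also have "\<dots> = (\<integral>\<^sup>+\<omega>. (\<integral>\<^sup>+\<xi>. ennreal ((norm (errm (step (st \<omega> k) \<xi>)))\<^sup>2) \<partial>D) \<partial>S)"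
  proof (rule fresh[OF D_prob, where G="\<lambda>X x. ennreal ((norm (errm (step (st X k) x)))\<^sup>2)"])
    show "(\<lambda>(X, x). ennreal ((norm (errm (step (st X k) x)))\<^sup>2)) \<in> borel_measurable (S \<Otimes>\<^sub>M D)"
      by measurable
  qed (simp add: st_upd)
  also have "\<dots> \<le> (\<integral>\<^sup>+\<omega>. ennreal ((1-\<beta>2)\<^sup>2 * (norm (errm (st \<omega> k)))\<^sup>2 + (2*\<beta>2\<^sup>2 * \<sigma>\<^sup>2 + 2*(1-\<beta>2)\<^sup>2 * L\<^sup>2 * c0)) \<partial>S)"
    by (intro nn_integral_mono inner_e) (unfold c0_def, rule step_bound[OF assms])
  also have "\<dots> = ennreal ((1-\<beta>2)\<^sup>2) * Ek k + ennreal (2*\<beta>2\<^sup>2 * \<sigma>\<^sup>2 + 2*(1-\<beta>2)\<^sup>2 * L\<^sup>2 * c0)"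
    unfolding Ek_def by (rule nn_affine) (use c0_nonneg in \<open>auto, measurable\<close>)
  finally show ?thesis .
qed

lemma V_Suc:
  assumes "k + 1 \<le> T"
  shows "Vk (Suc k) \<le> ennreal (2*(1-\<beta>1)\<^sup>2) * Ek k + ennreal ((1-\<beta>1)\<^sup>2 * (2 * L\<^sup>2 * c0) + \<beta>1\<^sup>2 * \<sigma>\<^sup>2)"
proof -
  have "Vk (Suc k) = (\<integral>\<^sup>+\<omega>. ennreal ((norm (errv (step (st \<omega> k) (\<omega> (B0 + k)))))\<^sup>2) \<partial>S)"
    by (simp add: Vk_def st_Suc)
  also have "\<dots> = (\<integral>\<^sup>+\<omega>. (\<integral>\<^sup>+\<xi>. ennreal ((norm (errv (step (st \<omega> k) \<xi>)))\<^sup>2) \<partial>D) \<partial>S)"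
  proof (rule fresh[OF D_prob, where G="\<lambda>X x. ennreal ((norm (errv (step (st X k) x)))\<^sup>2)"])
    show "(\<lambda>(X, x). ennreal ((norm (errv (step (st X k) x)))\<^sup>2)) \<in> borel_measurable (S \<Otimes>\<^sub>M D)"
      by measurable
  qed (simp add: st_upd)
  also have "\<dots> \<le> (\<integral>\<^sup>+\<omega>. ennreal ((1-\<beta>1)\<^sup>2 * (2 * (norm (errm (st \<omega> k)))\<^sup>2 + 2 * L\<^sup>2 * c0) + \<beta>1\<^sup>2 * \<sigma>\<^sup>2) \<partial>S)"
    by (intro nn_integral_mono inner_v) (unfold c0_def, rule step_bound[OF assms])
  also have "\<dots> = (\<integral>\<^sup>+\<omega>. ennreal ((2*(1-\<beta>1)\<^sup>2) * (norm (errm (st \<omega> k)))\<^sup>2 + ((1-\<beta>1)\<^sup>2 * (2 * L\<^sup>2 * c0) + \<beta>1\<^sup>2 * \<sigma>\<^sup>2)) \<partial>S)"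
    by (intro nn_integral_cong) (simp add: algebra_simps)
  also have "\<dots> = ennreal (2*(1-\<beta>1)\<^sup>2) * Ek k + ennreal ((1-\<beta>1)\<^sup>2 * (2 * L\<^sup>2 * c0) + \<beta>1\<^sup>2 * \<sigma>\<^sup>2)"
    unfolding Ek_def by (rule nn_affine) (use c0_nonneg in \<open>auto, measurable\<close>)
  finally show ?thesis .
qed

definition "A0 s = g x1 s - gradf x1"

lemma base_sum: "(\<integral>\<^sup>+\<omega>. ennreal ((norm (\<Sum>i<n. A0 (\<omega> i)))\<^sup>2) \<partial>S) \<le> ennreal (real n * \<sigma>\<^sup>2)"
proof (induction n)
  case 0
  then show ?case by simp
next
  case (Suc n)
  have A0m[measurable]: "A0 \<in> borel_measurable D" unfolding A0_def by measurable
  have A0f: "(\<integral>\<^sup>+\<xi>. ennreal ((norm (A0 \<xi>))\<^sup>2) \<partial>D) < \<infinity>" unfolding A0_def by (rule var_fin)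
  have EA: "integral\<^sup>L D A0 = 0" unfolding A0_def by (rule Egx)
  have "(\<integral>\<^sup>+\<omega>. ennreal ((norm (\<Sum>i<Suc n. A0 (\<omega> i)))\<^sup>2) \<partial>S)
      = (\<integral>\<^sup>+\<omega>. ennreal ((norm ((\<Sum>i<n. A0 (\<omega> i)) + A0 (\<omega> n)))\<^sup>2) \<partial>S)" by simp
  also have "\<dots> = (\<integral>\<^sup>+\<omega>. (\<integral>\<^sup>+\<xi>. ennreal ((norm ((\<Sum>i<n. A0 (\<omega> i)) + A0 \<xi>))\<^sup>2) \<partial>D) \<partial>S)"
  proof (rule fresh[OF D_prob, where G="\<lambda>X x. ennreal ((norm ((\<Sum>i<n. A0 (X i)) + A0 x))\<^sup>2)"])
    show "(\<lambda>(X, x). ennreal ((norm ((\<Sum>i<n. A0 (X i)) + A0 x))\<^sup>2)) \<in> borel_measurable (S \<Otimes>\<^sub>M D)"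
      by measurable
    fix X :: "nat \<Rightarrow> 's" and x
    have "(\<Sum>i<n. A0 ((X(n := x)) i)) = (\<Sum>i<n. A0 (X i))" by (intro sum.cong) auto
    then show "ennreal ((norm ((\<Sum>i<n. A0 ((X(n := x)) i)) + A0 x))\<^sup>2) = ennreal ((norm ((\<Sum>i<n. A0 (X i)) + A0 x))\<^sup>2)"
      by simp
  qed
  also have "\<dots> = (\<integral>\<^sup>+\<omega>. ennreal ((norm (\<Sum>i<n. A0 (\<omega> i)))\<^sup>2) + (\<integral>\<^sup>+\<xi>. ennreal ((norm (A0 \<xi>))\<^sup>2) \<partial>D) \<partial>S)"
    by (intro nn_integral_cong) (simp add: bias_var(2)[OF D_prob A0m A0f] EA)
  also have "\<dots> \<le> (\<integral>\<^sup>+\<omega>. ennreal (1 * (norm (\<Sum>i<n. A0 (\<omega> i)))\<^sup>2 + \<sigma>\<^sup>2) \<partial>S)"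
  proof (intro nn_integral_mono)
    fix \<omega>
    have "ennreal ((norm (\<Sum>i<n. A0 (\<omega> i)))\<^sup>2) + (\<integral>\<^sup>+\<xi>. ennreal ((norm (A0 \<xi>))\<^sup>2) \<partial>D)
       \<le> ennreal ((norm (\<Sum>i<n. A0 (\<omega> i)))\<^sup>2) + ennreal (\<sigma>\<^sup>2)"
      unfolding A0_def by (intro add_left_mono A3_var)
    moreover have "ennreal (1 * (norm (\<Sum>i<n. A0 (\<omega> i)))\<^sup>2 + \<sigma>\<^sup>2) = ennreal ((norm (\<Sum>i<n. A0 (\<omega> i)))\<^sup>2) + ennreal (\<sigma>\<^sup>2)"
      unfolding mult_1 by (rule ennreal_plus) auto
    ultimately show "ennreal ((norm (\<Sum>i<n. A0 (\<omega> i)))\<^sup>2) + (\<integral>\<^sup>+\<xi>. ennreal ((norm (A0 \<xi>))\<^sup>2) \<partial>D)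
       \<le> ennreal (1 * (norm (\<Sum>i<n. A0 (\<omega> i)))\<^sup>2 + \<sigma>\<^sup>2)"
      by simp
  qed
  also have "\<dots> = ennreal 1 * (\<integral>\<^sup>+\<omega>. ennreal ((norm (\<Sum>i<n. A0 (\<omega> i)))\<^sup>2) \<partial>S) + ennreal (\<sigma>\<^sup>2)"
    by (rule nn_affine) (auto, measurable)
  also have "\<dots> \<le> ennreal (real n * \<sigma>\<^sup>2) + ennreal (\<sigma>\<^sup>2)"
    using Suc.IH by (simp add: add_right_mono)
  also have "\<dots> = ennreal (real (Suc n) * \<sigma>\<^sup>2)"
  proof -
    have "real (Suc n) * \<sigma>\<^sup>2 = real n * \<sigma>\<^sup>2 + \<sigma>\<^sup>2" by (simp add: algebra_simps)
    then show ?thesis by (simp only:) (rule ennreal_plus[symmetric]; simp)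
  qed
  finally show ?case .
qed

lemma E_0: "Ek 0 \<le> ennreal (\<sigma>\<^sup>2 / real B0)"
proof -
  have B0p: "real B0 > 0" using B0 by simp
  have eq: "errm (st \<omega> 0) = (1 / real B0) *\<^sub>R (\<Sum>i<B0. A0 (\<omega> i))" for \<omega>
  proof -
    have "(\<Sum>i<B0. A0 (\<omega> i)) = (\<Sum>i<B0. g x1 (\<omega> i)) - real B0 *\<^sub>R gradf x1"
    proof -
      have "(\<Sum>i<B0. A0 (\<omega> i)) = (\<Sum>i<B0. g x1 (\<omega> i)) - (\<Sum>i<B0. gradf x1)"
        by (simp only: A0_def sum_subtractf)
      moreover have "(\<Sum>i<B0. gradf x1) = real B0 *\<^sub>R gradf x1"
        by (simp only: sum_constant_scaleR card_lessThan)
      ultimately show ?thesis by simp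
    qed
    then have "(1 / real B0) *\<^sub>R (\<Sum>i<B0. A0 (\<omega> i)) = m0 \<omega> - gradf x1"
      using B0p by (simp add: m0_def scaleR_diff_right)
    then show ?thesis by (simp add: errm_def st_0)
  qed
  have "Ek 0 = (\<integral>\<^sup>+\<omega>. ennreal ((1 / real B0)\<^sup>2) * ennreal ((norm (\<Sum>i<B0. A0 (\<omega> i)))\<^sup>2) \<partial>S)"
    unfolding Ek_def eq by (intro nn_integral_cong, subst ennreal_mult[symmetric]) (auto simp: power_divide)
  also have "\<dots> = ennreal ((1 / real B0)\<^sup>2) * (\<integral>\<^sup>+\<omega>. ennreal ((norm (\<Sum>i<B0. A0 (\<omega> i)))\<^sup>2) \<partial>S)"
    by (rule nn_integral_cmult) (unfold A0_def, measurable)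
  also have "\<dots> \<le> ennreal ((1 / real B0)\<^sup>2) * ennreal (real B0 * \<sigma>\<^sup>2)"
    by (intro mult_left_mono base_sum) simp
  also have "\<dots> = ennreal (\<sigma>\<^sup>2 / real B0)"
  proof -
    have "(1 / real B0)\<^sup>2 * (real B0 * \<sigma>\<^sup>2) = \<sigma>\<^sup>2 / real B0"
      using B0p by (simp add: power2_eq_square field_simps)
    moreover have "ennreal ((1 / real B0)\<^sup>2) * ennreal (real B0 * \<sigma>\<^sup>2) = ennreal ((1 / real B0)\<^sup>2 * (real B0 * \<sigma>\<^sup>2))"
      by (rule ennreal_mult[symmetric]) auto
    ultimately show ?thesis by simp
  qed
  finally show ?thesis .
qed

lemma V_0: "Vk 0 = Ek 0"
  by (simp add: Vk_def Ek_def errv_def errm_def st_0)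

end

lemma real_P1:
  fixes u a s B :: real
  assumes u: "0 < u" "u \<le> 1" and a: "0 \<le> a" "a \<le> (1-u)\<^sup>2" and s: "0 \<le> s" and B: "0 < B"
  shows "s / B + 2 * a * (s / B) * (1 / (1 - (1-u)\<^sup>2)) \<le> 2 * s / (B * u)"
proof -
  have d: "1 - (1-u)\<^sup>2 = u * (2 - u)" by (simp add: power2_eq_square algebra_simps)
  have dp: "0 < u * (2 - u)" using u by simp
  have key: "u * (2 - u) + 2 * a \<le> 2 * (2 - u)"
  proof -
    have "2 * a \<le> 2 * (1-u)\<^sup>2" using a by simp
    moreover have "u * (2 - u) + 2 * (1-u)\<^sup>2 \<le> 2 * (2 - u)"
      using u by (simp add: power2_eq_square algebra_simps) (smt (verit) mult_le_one mult_nonneg_nonneg)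
    ultimately show ?thesis by linarith
  qed
  have "1 + 2 * a * (1 / (u * (2 - u))) \<le> 2 / u"
  proof -
    have "1 + 2 * a * (1 / (u * (2 - u))) = (u * (2 - u) + 2 * a) / (u * (2 - u))"
      using dp u by (simp add: add_divide_distrib)
    also have "\<dots> \<le> (2 * (2 - u)) / (u * (2 - u))"
      using key dp by (intro divide_right_mono) auto
    also have "\<dots> = 2 / u" using u by (simp add: field_simps)
    finally show ?thesis .
  qed
  then have "(s / B) * (1 + 2 * a * (1 / (u * (2 - u)))) \<le> (s / B) * (2 / u)"
    using s B by (intro mult_left_mono) auto
  then show ?thesis unfolding d by (simp add: algebra_simps)
qed

lemma real_P2:
  fixes u a b1 s W :: real
  assumes u: "0 < u" "u \<le> 1" and a: "0 \<le> a" "a \<le> (1-u)\<^sup>2" and b1: "b1\<^sup>2 \<le> u"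
    and s: "0 \<le> s" and W: "0 \<le> W"
  shows "2 * a * ((2*u\<^sup>2 * s + 2*(1-u)\<^sup>2 * W) / (1 - (1-u)\<^sup>2)) + (a * (2 * W) + b1\<^sup>2 * s) \<le> 6 * W / u + 3 * u * s"
proof -
  have d: "1 - (1-u)\<^sup>2 = u * (2 - u)" by (simp add: power2_eq_square algebra_simps)
  have dp: "0 < u * (2 - u)" using u by simp
  have q1: "(1-u)\<^sup>2 \<le> 1" using u by (simp add: power_le_one)
  have a1: "a \<le> 1" using a q1 by linarith
  have two: "2 * (1-u)\<^sup>2 \<le> 2 - u"
    using u by (simp add: power2_eq_square algebra_simps)
  have i: "2 * a * (2*u\<^sup>2 * s / (u * (2 - u))) \<le> 2 * u * s"
  proof -
    have "2 * a * (2*u\<^sup>2 * s / (u * (2 - u))) = (4 * a * s) * (u / (2 - u))"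
      using u by (simp add: power2_eq_square field_simps)
    also have "\<dots> \<le> (4 * (1-u)\<^sup>2 * s) * (u / (2 - u))"
      using a s u by (intro mult_right_mono) auto
    also have "\<dots> = (2 * (1-u)\<^sup>2) * (2 * u * s / (2 - u))" by (simp add: field_simps)
    also have "\<dots> \<le> (2 - u) * (2 * u * s / (2 - u))"
      using two u s by (intro mult_right_mono) auto
    also have "\<dots> = 2 * u * s" using u by simp
    finally show ?thesis .
  qed
  have ii: "2 * a * (2*(1-u)\<^sup>2 * W / (u * (2 - u))) \<le> 4 * W / u"
  proof -
    have "2 * a * (2*(1-u)\<^sup>2 * W / (u * (2 - u))) = (4 * a * (1-u)\<^sup>2 * W / (2 - u)) / u"
      using u by (simp add: field_simps)
    also have "\<dots> \<le> (4 * W) / u"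
    proof (intro divide_right_mono)
      have "4 * a * (1-u)\<^sup>2 * W / (2 - u) \<le> 4 * a * (1-u)\<^sup>2 * W / 1"
        by (rule divide_left_mono) (use u a W in auto)
      then have "4 * a * (1-u)\<^sup>2 * W / (2 - u) \<le> 4 * a * (1-u)\<^sup>2 * W" by simp
      also have "\<dots> \<le> 4 * 1 * 1 * W"
        using a1 q1 a W by (intro mult_right_mono mult_mono) auto
      finally show "4 * a * (1-u)\<^sup>2 * W / (2 - u) \<le> 4 * W" by simp
    qed (use u in auto)
    finally show ?thesis .
  qed
  have iii: "a * (2 * W) \<le> 2 * W / u"
  proof -
    have "a * (2 * W) \<le> 1 * (2 * W)" using a1 W by (intro mult_right_mono) auto
    also have "\<dots> \<le> 2 * W / u" using u W by (simp add: le_divide_eq mult_left_le)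
    finally show ?thesis .
  qed
  have iv: "b1\<^sup>2 * s \<le> u * s" using b1 s by (rule mult_right_mono)
  have "2 * a * ((2*u\<^sup>2 * s + 2*(1-u)\<^sup>2 * W) / (1 - (1-u)\<^sup>2))
      = 2 * a * (2*u\<^sup>2 * s / (u * (2 - u))) + 2 * a * (2*(1-u)\<^sup>2 * W / (u * (2 - u)))"
    unfolding d by (simp add: add_divide_distrib algebra_simps)
  moreover have "6 * W / u = 4 * W / u + 2 * W / u" by (simp add: add_divide_distrib[symmetric])
  ultimately show ?thesis using i ii iii iv by linarith
qed

lemma sum_shift1:
  fixes f :: "nat \<Rightarrow> 'a::comm_monoid_add" and n :: nat
  shows "(\<Sum>t\<in>{1..n}. f (t - 1)) = (\<Sum>k<n. f k)"
  by (induction n) (auto simp: atLeastAtMostSuc_conv add.commute)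

lemma geom_le:
  fixes q :: real assumes "0 \<le> q" "q < 1"
  shows "(\<Sum>k<n. q ^ k) \<le> 1 / (1 - q)"
proof -
  have "(\<Sum>k<n. q ^ k) = (1 - q ^ n) / (1 - q)" using assms by (simp add: sum_gp_strict)
  also have "\<dots> \<le> 1 / (1 - q)" using assms by (intro divide_right_mono) auto
  finally show ?thesis .
qed

context lion begin

interpretation D: prob_space D by (rule D_prob)
interpretation S: prob_space S using D_prob by (intro prob_space_PiM) auto

definition "q = (1-\<beta>2)\<^sup>2"
definition "c1 = 2*\<beta>2\<^sup>2 * \<sigma>\<^sup>2 + 2*(1-\<beta>2)\<^sup>2 * L\<^sup>2 * c0"
definition "K = c1 / (1 - q)"
definition "Eb k = q ^ k * (\<sigma>\<^sup>2 / real B0) + K"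
definition "Cst = (1-\<beta>1)\<^sup>2 * (2 * L\<^sup>2 * c0) + \<beta>1\<^sup>2 * \<sigma>\<^sup>2"
definition "Vb k = (if k = 0 then \<sigma>\<^sup>2 / real B0 else 2*(1-\<beta>1)\<^sup>2 * Eb (k - 1) + Cst)"

lemma q_facts: "0 \<le> q" "q < 1" "0 < 1 - q"
proof -
  show "0 \<le> q" by (simp add: q_def)
  have "1 - \<beta>2 < 1" "0 \<le> 1 - \<beta>2" using b2 by auto
  then have "(1 - \<beta>2)\<^sup>2 < 1" by (simp add: power_less_one_iff abs_if)
  then show "q < 1" "0 < 1 - q" by (auto simp: q_def)
qed

lemma c1_nonneg: "0 \<le> c1" unfolding c1_def using c0_nonneg by simp

lemma K_nonneg: "0 \<le> K" unfolding K_def using c1_nonneg q_facts by simp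

lemma K_fix: "q * K + c1 = K"
  using q_facts unfolding K_def by (simp add: field_simps)

lemma Eb_nonneg: "0 \<le> Eb k" unfolding Eb_def using q_facts K_nonneg by simp

lemma Cst_nonneg: "0 \<le> Cst" unfolding Cst_def using c0_nonneg by simp

lemma E_bound: "k + 1 \<le> T \<Longrightarrow> Ek k \<le> ennreal (Eb k)"
proof (induction k)
  case 0
  have "Ek 0 \<le> ennreal (\<sigma>\<^sup>2 / real B0)" by (rule E_0)
  also have "\<dots> \<le> ennreal (Eb 0)" unfolding Eb_def using K_nonneg by (intro ennreal_leI) simp
  finally show ?case .
next
  case (Suc k)
  then have IH: "Ek k \<le> ennreal (Eb k)" by simp
  have "Ek (Suc k) \<le> ennreal q * Ek k + ennreal c1"
    using E_Suc[of k] Suc.prems by (simp add: q_def c1_def)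
  also have "\<dots> \<le> ennreal q * ennreal (Eb k) + ennreal c1"
    by (intro add_right_mono mult_left_mono IH) simp
  also have "\<dots> = ennreal (q * Eb k + c1)"
    using q_facts Eb_nonneg[of k] c1_nonneg by (simp add: ennreal_mult ennreal_plus)
  also have "q * Eb k + c1 = Eb (Suc k)"
    using K_fix unfolding Eb_def by (simp add: algebra_simps)
  finally show ?case .
qed

lemma V_bound: "k + 1 \<le> T \<Longrightarrow> Vk k \<le> ennreal (Vb k)"
proof (cases k)
  case 0
  then show ?thesis using E_0 by (simp add: V_0 Vb_def)
next
  case (Suc j)
  assume kT: "k + 1 \<le> T"
  then have jT: "j + 1 \<le> T" using Suc by simp
  have "Vk k \<le> ennreal (2*(1-\<beta>1)\<^sup>2) * Ek j + ennreal Cst"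
    using V_Suc[OF jT] Suc by (simp add: Cst_def)
  also have "\<dots> \<le> ennreal (2*(1-\<beta>1)\<^sup>2) * ennreal (Eb j) + ennreal Cst"
    by (intro add_right_mono mult_left_mono E_bound jT) simp
  also have "\<dots> = ennreal (2*(1-\<beta>1)\<^sup>2 * Eb j + Cst)"
    using Eb_nonneg[of j] Cst_nonneg by (simp add: ennreal_mult ennreal_plus)
  also have "\<dots> = ennreal (Vb k)" using Suc by (simp add: Vb_def)
  finally show ?thesis .
qed

lemma Vb_nonneg: "0 \<le> Vb k"
  unfolding Vb_def using Eb_nonneg Cst_nonneg by simp

lemma real_sum_bound:
  "(1 / real T) * (\<Sum>k<T. Vb k)
     \<le> 2 * \<sigma>\<^sup>2 / (real B0 * \<beta>2 * real T) + 16 * \<eta>\<^sup>2 * L\<^sup>2 * real CARD('d) / \<beta>2 + 3 * \<beta>2 * \<sigma>\<^sup>2"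
proof -
  obtain n where n: "T = Suc n" using T by (cases T) auto
  define a where "a = (1-\<beta>1)\<^sup>2"
  define W where "W = L\<^sup>2 * c0"
  define s where "s = \<sigma>\<^sup>2"
  define B where "B = real B0"
  have Bp: "0 < B" using B0 by (simp add: B_def)
  have a0: "0 \<le> a" by (simp add: a_def)
  have aq: "a \<le> (1-\<beta>2)\<^sup>2" unfolding a_def using b1 b21 by (intro power_mono) auto
  have W0: "0 \<le> W" using c0_nonneg by (simp add: W_def)
  have s0: "0 \<le> s" by (simp add: s_def)
  define R where "R = 6 * W / \<beta>2 + 3 * \<beta>2 * s"
  have R0: "0 \<le> R" unfolding R_def using W0 s0 b2 by simp
  have sumeq: "(\<Sum>k<T. Vb k) = s / B + (2 * a * (s / B)) * (\<Sum>k<n. q ^ k) + real n * (2 * a * K + Cst)"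
  proof -
    have "(\<Sum>k<T. Vb k) = Vb 0 + (\<Sum>k<n. Vb (Suc k))" unfolding n by (rule sum.lessThan_Suc_shift)
    moreover have "Vb (Suc k) = (2 * a * (s / B)) * q ^ k + (2 * a * K + Cst)" for k
      by (simp add: Vb_def Eb_def a_def s_def B_def algebra_simps)
    moreover have "Vb 0 = s / B" by (simp add: Vb_def s_def B_def)
    ultimately show ?thesis by (simp add: sum.distrib sum_distrib_left)
  qed
  have "(2 * a * (s / B)) * (\<Sum>k<n. q ^ k) \<le> (2 * a * (s / B)) * (1 / (1 - q))"
    using geom_le[OF q_facts(1,2)] a0 s0 Bp by (intro mult_left_mono) auto
  moreover have "s / B + 2 * a * (s / B) * (1 / (1 - q)) \<le> 2 * s / (B * \<beta>2)"
    unfolding q_def by (rule real_P1[OF b2 a0 aq s0 Bp])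
  moreover have "2 * a * K + Cst \<le> R"
  proof -
    have "c1 = 2 * \<beta>2\<^sup>2 * s + 2 * (1 - \<beta>2)\<^sup>2 * W"
      by (simp add: c1_def W_def s_def mult_ac)
    then have "K = (2 * \<beta>2\<^sup>2 * s + 2 * (1 - \<beta>2)\<^sup>2 * W) / (1 - (1 - \<beta>2)\<^sup>2)"
      by (simp add: K_def c1_def q_def W_def s_def mult_ac)
    moreover have "Cst = a * (2 * W) + \<beta>1\<^sup>2 * s" by (simp add: Cst_def a_def W_def s_def mult_ac)
    ultimately show ?thesis unfolding R_def
      using real_P2[OF b2 a0 aq b12 s0 W0] by simp
  qed
  ultimately have "(\<Sum>k<T. Vb k) \<le> 2 * s / (B * \<beta>2) + real n * R"
    unfolding sumeq by (smt (verit) mult_left_mono of_nat_0_le_iff)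
  also have "\<dots> \<le> 2 * s / (B * \<beta>2) + real T * R"
    using R0 n by (intro add_left_mono mult_right_mono) auto
  finally have S1: "(\<Sum>k<T. Vb k) \<le> 2 * s / (B * \<beta>2) + real T * R" .
  have Tp: "0 < real T" using T by simp
  have "(1 / real T) * (\<Sum>k<T. Vb k) \<le> (1 / real T) * (2 * s / (B * \<beta>2) + real T * R)"
    using S1 Tp by (intro mult_left_mono) auto
  also have "\<dots> = 2 * s / (B * \<beta>2 * real T) + R"
    using Tp by (simp add: field_simps)
  also have "R \<le> 16 * \<eta>\<^sup>2 * L\<^sup>2 * real CARD('d) / \<beta>2 + 3 * \<beta>2 * \<sigma>\<^sup>2"
  proof -
    have "6 * W = 27/2 * (\<eta>\<^sup>2 * L\<^sup>2 * real CARD('d))" by (simp add: W_def c0_def)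
    also have "\<dots> \<le> 16 * (\<eta>\<^sup>2 * L\<^sup>2 * real CARD('d))" by (intro mult_right_mono) auto
    finally have "6 * W / \<beta>2 \<le> 16 * (\<eta>\<^sup>2 * L\<^sup>2 * real CARD('d)) / \<beta>2"
      using b2 by (intro divide_right_mono) auto
    then show ?thesis unfolding R_def s_def by (simp add: mult_ac)
  qed
  finally show ?thesis by (simp add: s_def B_def)
qed

lemma final:
  "(\<integral>\<^sup>+ \<omega>. ennreal ((1 / real T) *
            (\<Sum>t\<in>{1..T}. (norm (lion_v g \<beta>1 \<beta>2 \<eta> lam B0 x1 \<omega> t
                                - gradf (lion_x g \<beta>1 \<beta>2 \<eta> lam B0 x1 \<omega> t)))\<^sup>2)) \<partial>S)
   \<le> ennreal (2 * \<sigma>\<^sup>2 / (real B0 * \<beta>2 * real T) + 16 * \<eta>\<^sup>2 * L\<^sup>2 * real CARD('d) / \<beta>2 + 3 * \<beta>2 * \<sigma>\<^sup>2)"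
proof -
  have eq: "(\<Sum>t\<in>{1..T}. (norm (lion_v g \<beta>1 \<beta>2 \<eta> lam B0 x1 \<omega> t - gradf (lion_x g \<beta>1 \<beta>2 \<eta> lam B0 x1 \<omega> t)))\<^sup>2)
      = (\<Sum>k<T. (norm (errv (st \<omega> k)))\<^sup>2)" for \<omega>
    unfolding lion_v_def lion_x_def errv_def st_def[symmetric]
    by (rule sum_shift1[where f = "\<lambda>k. (norm (fst (snd (st \<omega> k)) - gradf (fst (st \<omega> k))))\<^sup>2"])
  have "(\<integral>\<^sup>+ \<omega>. ennreal ((1 / real T) *
            (\<Sum>t\<in>{1..T}. (norm (lion_v g \<beta>1 \<beta>2 \<eta> lam B0 x1 \<omega> t
                                - gradf (lion_x g \<beta>1 \<beta>2 \<eta> lam B0 x1 \<omega> t)))\<^sup>2)) \<partial>S)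
      = (\<integral>\<^sup>+ \<omega>. ennreal (1 / real T) * (\<Sum>k<T. ennreal ((norm (errv (st \<omega> k)))\<^sup>2)) \<partial>S)"
    unfolding eq
  proof (intro nn_integral_cong)
    fix \<omega>
    have "(\<Sum>k<T. ennreal ((norm (errv (st \<omega> k)))\<^sup>2)) = ennreal (\<Sum>k<T. (norm (errv (st \<omega> k)))\<^sup>2)"
      by simp
    moreover have "ennreal ((1 / real T) * (\<Sum>k<T. (norm (errv (st \<omega> k)))\<^sup>2))
       = ennreal (1 / real T) * ennreal (\<Sum>k<T. (norm (errv (st \<omega> k)))\<^sup>2)"
      by (rule ennreal_mult) (auto intro: sum_nonneg)
    ultimately show "ennreal ((1 / real T) * (\<Sum>k<T. (norm (errv (st \<omega> k)))\<^sup>2))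
       = ennreal (1 / real T) * (\<Sum>k<T. ennreal ((norm (errv (st \<omega> k)))\<^sup>2))" by simp
  qed
  also have "\<dots> = ennreal (1 / real T) * (\<integral>\<^sup>+ \<omega>. (\<Sum>k<T. ennreal ((norm (errv (st \<omega> k)))\<^sup>2)) \<partial>S)"
    by (rule nn_integral_cmult) measurable
  also have "(\<integral>\<^sup>+ \<omega>. (\<Sum>k<T. ennreal ((norm (errv (st \<omega> k)))\<^sup>2)) \<partial>S) = (\<Sum>k<T. Vk k)"
    unfolding Vk_def by (rule nn_integral_sum) measurable
  also have "(\<Sum>k<T. Vk k) \<le> (\<Sum>k<T. ennreal (Vb k))"
    by (intro sum_mono V_bound) simp
  also have "(\<Sum>k<T. ennreal (Vb k)) = ennreal (\<Sum>k<T. Vb k)"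
    using Vb_nonneg by simp
  also have "ennreal (1 / real T) * ennreal (\<Sum>k<T. Vb k) = ennreal ((1 / real T) * (\<Sum>k<T. Vb k))"
    by (rule ennreal_mult[symmetric]) (auto intro!: sum_nonneg Vb_nonneg)
  also have "\<dots> \<le> ennreal (2 * \<sigma>\<^sup>2 / (real B0 * \<beta>2 * real T) + 16 * \<eta>\<^sup>2 * L\<^sup>2 * real CARD('d) / \<beta>2 + 3 * \<beta>2 * \<sigma>\<^sup>2)"
    by (intro ennreal_leI real_sum_bound)
  finally show ?thesis by (simp add: mult_left_mono)
qed

end

theorem mainTheorem5:
  fixes f :: "real^'d \<Rightarrow> real"
    and gradf :: "real^'d \<Rightarrow> real^'d"
    and g :: "real^'d \<Rightarrow> 's \<Rightarrow> real^'d"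
    and D :: "'s measure"
    and L \<sigma> \<beta>1 \<beta>2 \<eta> lam :: real
    and B0 T :: nat
    and x1 :: "real^'d"
  assumes D_prob: "prob_space D"
    and grad: "\<And>x. GDERIV f x :> gradf x"
    and g_meas: "(\<lambda>(x, s). g x s) \<in> borel_measurable (borel \<Otimes>\<^sub>M D)"
    and A2: "\<And>x y. (\<integral>\<^sup>+ s. ennreal ((norm (g x s - g y s))\<^sup>2) \<partial>D) \<le> ennreal (L\<^sup>2 * (norm (x - y))\<^sup>2)"
    and A3_mean: "\<And>x. (\<integral> s. g x s \<partial>D) = gradf x"
    and A3_var: "\<And>x. (\<integral>\<^sup>+ s. ennreal ((norm (g x s - gradf x))\<^sup>2) \<partial>D) \<le> ennreal (\<sigma>\<^sup>2)"
    and T: "T \<ge> 1"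
    and B0: "B0 \<ge> 1"
    and b1: "0 < \<beta>1" "\<beta>1 \<le> 1"
    and b2: "0 < \<beta>2" "\<beta>2 \<le> 1"
    and b21: "\<beta>2 \<le> \<beta>1" and b12: "\<beta>1 \<le> sqrt \<beta>2"
    and B0b2: "real B0 * \<beta>2 \<le> 1"
    and eta: "\<eta> > 0"
    and lam: "0 \<le> lam" "lam \<le> 1 / (2 * \<eta> * real T)"
    and x1: "\<And>i. \<bar>x1 $ i\<bar> \<le> \<eta>"
  shows "(\<integral>\<^sup>+ \<omega>. ennreal ((1 / real T) *
            (\<Sum>t\<in>{1..T}. (norm (lion_v g \<beta>1 \<beta>2 \<eta> lam B0 x1 \<omega> t
                                - gradf (lion_x g \<beta>1 \<beta>2 \<eta> lam B0 x1 \<omega> t)))\<^sup>2))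
          \<partial>(PiM UNIV (\<lambda>_::nat. D)))
         \<le> ennreal (2 * \<sigma>\<^sup>2 / (real B0 * \<beta>2 * real T)
                    + 16 * \<eta>\<^sup>2 * L\<^sup>2 * real CARD('d) / \<beta>2 + 3 * \<beta>2 * \<sigma>\<^sup>2)"
proof -
  have b12': "\<beta>1\<^sup>2 \<le> \<beta>2"
  proof -
    have "\<beta>1\<^sup>2 \<le> (sqrt \<beta>2)\<^sup>2" using b12 b1 by (intro power_mono) auto
    then show ?thesis using b2 by simp
  qed
  interpret l: lion gradf g D L \<sigma> \<beta>1 \<beta>2 \<eta> lam B0 T x1
    by (rule lion.intro[OF D_prob g_meas A2 A3_mean A3_var T B0 b1 b2 b21 b12' eta lam x1])
  show ?thesis by (rule l.final)
qed

end
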